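(* Let $\rho\ge1$. Any deterministic LOCAL algorithm has the following lower bound on its round complexity, where $\Omega$ hides an absolute constant, if it is guaranteed to output, on every $n$-vertex graph, a $\rho$-approximate maximum cardinality matching. Specifically, it must use $\Omega(\log^* n/\rho)$ rounds on some $n$-vertex ring (cycle) graph. In particular, this holds even when restricted to graphs of maximum degree 2.
   Context: **Approximate matchings.** A matching $M$ of a graph is a $\rho$-approximate maximum cardinality matching if $|M|\ge \tau/\rho$, where $\tau$ is the maximum size of a matching in the graph. **LOCAL model on graphs.** Computation proceeds in synchronous rounds: - Each vertex does unbounded local computation and exchanges unbounded messages with its neighbours. - Vertices have unique $O(\log n)$-bit IDs. - After $t$ rounds, each vertex outputs which of its incident edges are in the matching. *)

theory Defs
  imports Complex_Main
begin

definition log_star :: "nat \<Rightarrow> nat" where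
  "log_star n = (LEAST k. ((log 2) ^^ k) (real n) \<le> 1)"

definition simple_graph :: "nat \<Rightarrow> (nat \<Rightarrow> nat \<Rightarrow> bool) \<Rightarrow> bool" where
  "simple_graph n E \<longleftrightarrow> (\<forall>u v. E u v \<longrightarrow> u < n \<and> v < n \<and> u \<noteq> v \<and> E v u)"

definition nbrs :: "(nat \<Rightarrow> nat \<Rightarrow> bool) \<Rightarrow> nat \<Rightarrow> nat set" where
  "nbrs E v = {u. E v u}"

definition deg :: "(nat \<Rightarrow> nat \<Rightarrow> bool) \<Rightarrow> nat \<Rightarrow> nat" where
  "deg E v = card (nbrs E v)"

definition max_degree_le :: "nat \<Rightarrow> (nat \<Rightarrow> nat \<Rightarrow> bool) \<Rightarrow> nat \<Rightarrow> bool" where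
  "max_degree_le n E d \<longleftrightarrow> (\<forall>v<n. deg E v \<le> d)"

definition cycle_graph :: "nat \<Rightarrow> nat \<Rightarrow> nat \<Rightarrow> bool" where
  "cycle_graph n u v \<longleftrightarrow> u < n \<and> v < n \<and> u \<noteq> v \<and> (v = (u + 1) mod n \<or> u = (v + 1) mod n)"

definition graph_edges :: "nat \<Rightarrow> (nat \<Rightarrow> nat \<Rightarrow> bool) \<Rightarrow> nat set set" where
  "graph_edges n E = {{u, v} | u v. u < n \<and> v < n \<and> E u v}"

definition is_matching :: "nat \<Rightarrow> (nat \<Rightarrow> nat \<Rightarrow> bool) \<Rightarrow> nat set set \<Rightarrow> bool" where
  "is_matching n E M \<longleftrightarrow> M \<subseteq> graph_edges n E \<and> (\<forall>e\<in>M. \<forall>e'\<in>M. e \<noteq> e' \<longrightarrow> e \<inter> e' = {})"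

definition max_matching_size :: "nat \<Rightarrow> (nat \<Rightarrow> nat \<Rightarrow> bool) \<Rightarrow> nat" where
  "max_matching_size n E = Max (card ` {M. is_matching n E M})"

definition approx_matching :: "real \<Rightarrow> nat \<Rightarrow> (nat \<Rightarrow> nat \<Rightarrow> bool) \<Rightarrow> nat set set \<Rightarrow> bool" where
  "approx_matching \<rho> n E M \<longleftrightarrow> is_matching n E M \<and> real (card M) \<ge> real (max_matching_size n E) / \<rho>"

text \<open>Unique O(log n)-bit identifiers: injective, values below n^C.\<close>
definition valid_ids :: "nat \<Rightarrow> nat \<Rightarrow> (nat \<Rightarrow> nat) \<Rightarrow> bool" where
  "valid_ids C n idf \<longleftrightarrow> inj_on idf {..<n} \<and> (\<forall>v<n. idf v < n ^ C)"

definition valid_ports :: "nat \<Rightarrow> (nat \<Rightarrow> nat \<Rightarrow> bool) \<Rightarrow> (nat \<Rightarrow> nat \<Rightarrow> nat) \<Rightarrow> bool" where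
  "valid_ports n E port \<longleftrightarrow> (\<forall>v<n. bij_betw (port v) {..<deg E v} (nbrs E v))"

definition backport :: "(nat \<Rightarrow> nat \<Rightarrow> bool) \<Rightarrow> (nat \<Rightarrow> nat \<Rightarrow> nat) \<Rightarrow> nat \<Rightarrow> nat \<Rightarrow> nat" where
  "backport E port u v = (THE j. j < deg E u \<and> port u j = v)"

text \<open>States and messages are encoded as natural numbers (unbounded).
 init: initial state from own ID and degree;
 msg s i: message sent in the current round through port i when in state s;
 trans s r: new state, r i = Some (message received on port i) for i < degree;
 out s: set of ports whose incident edges are declared to be in the matching.\<close>
record local_alg =
  alg_init :: "nat \<Rightarrow> nat \<Rightarrow> nat"
  alg_msg :: "nat \<Rightarrow> nat \<Rightarrow> nat"
  alg_trans :: "nat \<Rightarrow> (nat \<Rightarrow> nat option) \<Rightarrow> nat"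
  alg_out :: "nat \<Rightarrow> nat set"

fun run :: "local_alg \<Rightarrow> (nat \<Rightarrow> nat \<Rightarrow> bool) \<Rightarrow> (nat \<Rightarrow> nat) \<Rightarrow> (nat \<Rightarrow> nat \<Rightarrow> nat)
             \<Rightarrow> nat \<Rightarrow> nat \<Rightarrow> nat" where
  "run A E idf port 0 v = alg_init A (idf v) (deg E v)"
| "run A E idf port (Suc r) v =
     alg_trans A (run A E idf port r v)
       (\<lambda>i. if i < deg E v
            then Some (alg_msg A (run A E idf port r (port v i)) (backport E port (port v i) v))
            else None)"

definition chosen_edges :: "local_alg \<Rightarrow> (nat \<Rightarrow> nat \<Rightarrow> bool) \<Rightarrow> (nat \<Rightarrow> nat) \<Rightarrow> (nat \<Rightarrow> nat \<Rightarrow> nat)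
             \<Rightarrow> nat \<Rightarrow> nat \<Rightarrow> nat set set" where
  "chosen_edges A E idf port r v = {{v, port v i} | i. i \<in> alg_out A (run A E idf port r v)}"

definition output_ok :: "real \<Rightarrow> nat \<Rightarrow> local_alg \<Rightarrow> (nat \<Rightarrow> nat \<Rightarrow> bool) \<Rightarrow> (nat \<Rightarrow> nat)
             \<Rightarrow> (nat \<Rightarrow> nat \<Rightarrow> nat) \<Rightarrow> nat \<Rightarrow> bool" where
  "output_ok \<rho> n A E idf port r \<longleftrightarrow>
     (\<forall>v<n. alg_out A (run A E idf port r v) \<subseteq> {..<deg E v}) \<and>
     (\<forall>u<n. \<forall>v<n. E u v \<longrightarrow>
        ({u, v} \<in> chosen_edges A E idf port r u \<longleftrightarrow> {u, v} \<in> chosen_edges A E idf port r v)) \<and>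
     approx_matching \<rho> n E (\<Union>v\<in>{..<n}. chosen_edges A E idf port r v)"

definition solved_by :: "real \<Rightarrow> nat \<Rightarrow> local_alg \<Rightarrow> (nat \<Rightarrow> nat \<Rightarrow> bool) \<Rightarrow> (nat \<Rightarrow> nat)
             \<Rightarrow> (nat \<Rightarrow> nat \<Rightarrow> nat) \<Rightarrow> nat \<Rightarrow> bool" where
  "solved_by \<rho> n A E idf port r \<longleftrightarrow>
     (\<forall>r'\<ge>r. output_ok \<rho> n A E idf port r' \<and>
              (\<forall>v<n. alg_out A (run A E idf port r' v) = alg_out A (run A E idf port r v)))"

end

theory Submission
  imports Defs
begin


definition portc :: "nat \<Rightarrow> nat \<Rightarrow> nat \<Rightarrow> nat" where
  "portc n v i = (if i = 0 then (v+1) mod n else (v + n - 1) mod n)"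

lemma succ_eq: "(v::nat) < n \<Longrightarrow> (v+1) mod n = (if v+1 = n then 0 else v+1)"
  by auto
lemma pred_eq: "(v::nat) < n \<Longrightarrow> (v+n-1) mod n = (if v = 0 then n-1 else v-1)"
proof -
  assume v: "v < n"
  show ?thesis
  proof (cases "v = 0")
    case True then show ?thesis using v by auto
  next
    case False
    then have "v + n - 1 = (v - 1) + n" by auto
    then have "(v+n-1) mod n = ((v - 1) + n) mod n" by simp
    also have "\<dots> = v - 1" using v by simp
    finally show ?thesis using False by simp
  qed
qed

lemma cyc_iff:
  fixes n v u :: nat
  assumes "n \<ge> 3" "v < n"
  shows "cycle_graph n v u \<longleftrightarrow> u = (v+1) mod n \<or> u = (v+n-1) mod n"
proof
  assume h: "cycle_graph n v u"
  then have u: "u < n" "u \<noteq> v" and d: "u = (v + 1) mod n \<or> v = (u + 1) mod n"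
    unfolding cycle_graph_def by auto
  show "u = (v+1) mod n \<or> u = (v+n-1) mod n"
  proof (cases "u = (v+1) mod n")
    case False
    with d have "v = (u+1) mod n" by auto
    then show ?thesis using u assms pred_eq[of v n] succ_eq[of u n]
      by (cases "u + 1 = n") auto
  qed auto
next
  assume "u = (v+1) mod n \<or> u = (v+n-1) mod n"
  then show "cycle_graph n v u" using assms pred_eq[of v n] succ_eq[of v n] unfolding cycle_graph_def
    by (auto split: if_splits)
qed

lemma nbrs_cyc:
  fixes n v :: nat
  assumes "n \<ge> 3" "v < n"
  shows "nbrs (cycle_graph n) v = {(v+1) mod n, (v+n-1) mod n}"
  using cyc_iff[OF assms] unfolding nbrs_def by auto

lemma nbrs_distinct:
  fixes n v :: nat
  assumes "n \<ge> 3" "v < n"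
  shows "(v+1) mod n \<noteq> (v+n-1) mod n"
  using assms pred_eq[of v n] succ_eq[of v n] by (auto split: if_splits)

lemma deg_cyc:
  fixes n v :: nat
  assumes "n \<ge> 3" "v < n"
  shows "deg (cycle_graph n) v = 2"
  unfolding deg_def nbrs_cyc[OF assms] using nbrs_distinct[OF assms] by simp

lemma valid_ports_cyc:
  fixes n :: nat
  assumes "n \<ge> 3"
  shows "valid_ports n (cycle_graph n) (portc n)"
  unfolding valid_ports_def
proof (intro allI impI)
  fix v assume v: "v < n"
  have "{..<2::nat} = {0,1}" by auto
  then show "bij_betw (portc n v) {..<deg (cycle_graph n) v} (nbrs (cycle_graph n) v)"
    unfolding deg_cyc[OF assms v] nbrs_cyc[OF assms v]
    using nbrs_distinct[OF assms v]
    by (auto simp: bij_betw_def portc_def inj_on_def)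
qed

lemma succ_pred:
  fixes n v :: nat
  assumes "n \<ge> 3" "v < n"
  shows "((v+1) mod n + n - 1) mod n = v" "((v+n-1) mod n + 1) mod n = v"
  using assms pred_eq[of v n] succ_eq[of v n] pred_eq[of "(v+1) mod n" n] succ_eq[of "(v+n-1) mod n" n]
  by (auto split: if_splits)

lemma backport_succ:
  fixes n v :: nat
  assumes "n \<ge> 3" "v < n"
  shows "backport (cycle_graph n) (portc n) ((v+1) mod n) v = 1"
proof -
  have u: "(v+1) mod n < n" using assms by auto
  show ?thesis unfolding backport_def deg_cyc[OF assms(1) u]
    using succ_pred[OF assms] nbrs_distinct[OF assms(1) u] assms
      pred_eq[of v n] succ_eq[of v n] pred_eq[of "(v+1) mod n" n] succ_eq[of "(v+n-1) mod n" n]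
    by (intro the_equality) (auto simp: portc_def less_2_cases_iff split: if_splits)
qed

lemma backport_pred:
  fixes n v :: nat
  assumes "n \<ge> 3" "v < n"
  shows "backport (cycle_graph n) (portc n) ((v+n-1) mod n) v = 0"
proof -
  have u: "(v+n-1) mod n < n" using assms by auto
  show ?thesis unfolding backport_def deg_cyc[OF assms(1) u]
    using succ_pred[OF assms] nbrs_distinct[OF assms(1) u] assms
      pred_eq[of v n] succ_eq[of v n] pred_eq[of "(v+1) mod n" n] succ_eq[of "(v+n-1) mod n" n]
    by (intro the_equality) (auto simp: portc_def less_2_cases_iff split: if_splits)
qed

fun F :: "local_alg \<Rightarrow> nat \<Rightarrow> (int \<Rightarrow> nat) \<Rightarrow> nat" where
  "F A 0 s = alg_init A (s 0) 2"
| "F A (Suc r) s = alg_trans A (F A r s)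
     (\<lambda>i. if i < 2 then Some (alg_msg A (F A r (\<lambda>j. s (j + (if i = 0 then 1 else -1))))
                                  (if i = 0 then 1 else 0)) else None)"

lemma F_local:
  "(\<And>j. \<bar>j\<bar> \<le> int r \<Longrightarrow> s j = s' j) \<Longrightarrow> F A r s = F A r s'"
proof (induction r arbitrary: s s')
  case 0
  then show ?case by simp
next
  case (Suc r)
  have e1: "F A r s = F A r s'" by (rule Suc.IH) (use Suc.prems in auto)
  have e2: "F A r (\<lambda>j. s (j + d)) = F A r (\<lambda>j. s' (j + d))" if "\<bar>d\<bar> \<le> 1" for d
    by (rule Suc.IH) (use Suc.prems that in auto)
  have e3: "F A r (\<lambda>j. s (j + (if i = 0 then 1 else -1))) = F A r (\<lambda>j. s' (j + (if i = 0 then 1 else -1)))" for i::nat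
    by (rule e2) auto
  have e4: "(\<lambda>i::nat. if i < 2 then Some (alg_msg A (F A r (\<lambda>j. s (j + (if i = 0 then 1 else -1))))
                                  (if i = 0 then 1 else 0)) else None)
     = (\<lambda>i::nat. if i < 2 then Some (alg_msg A (F A r (\<lambda>j. s' (j + (if i = 0 then 1 else -1))))
                                  (if i = 0 then 1 else 0)) else None)"
    by (rule ext) (simp only: e3)
  show ?case by (simp only: F.simps e1 e4)
qed

definition seqv :: "nat \<Rightarrow> (nat \<Rightarrow> nat) \<Rightarrow> nat \<Rightarrow> int \<Rightarrow> nat" where
  "seqv n idf v = (\<lambda>j. idf (nat ((int v + j) mod int n)))"

lemma seqv_shift_succ:
  fixes n v :: nat
  assumes "n \<ge> 3" "v < n"
  shows "(\<lambda>j. seqv n idf v (j + 1)) = seqv n idf ((v+1) mod n)"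
proof -
  have "(int v + (j + 1)) mod int n = (int ((v + 1) mod n) + j) mod int n" for j
    by (simp add: zmod_int mod_add_left_eq mod_add_right_eq algebra_simps)
  then show ?thesis unfolding seqv_def by auto
qed

lemma seqv_shift_pred:
  fixes n v :: nat
  assumes "n \<ge> 3" "v < n"
  shows "(\<lambda>j. seqv n idf v (j + -1)) = seqv n idf ((v+n-1) mod n)"
proof -
  have "(int v + (j + -1)) mod int n = (int ((v + n - 1) mod n) + j) mod int n" for j
  proof -
    have "int ((v + n - 1) mod n) = (int v + int n - 1) mod int n"
      using assms by (simp add: zmod_int of_nat_diff)
    then have "(int ((v + n - 1) mod n) + j) mod int n = (int v + int n - 1 + j) mod int n"
      by (simp add: mod_add_left_eq)
    also have "\<dots> = (int v + (j + -1) + int n) mod int n" by (simp add: algebra_simps)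
    also have "\<dots> = (int v + (j + -1)) mod int n" by simp
    finally show ?thesis by simp
  qed
  then show ?thesis unfolding seqv_def by auto
qed

lemma run_F:
  fixes n v :: nat
  assumes "n \<ge> 3" "v < n"
  shows "run A (cycle_graph n) idf (portc n) r v = F A r (seqv n idf v)"
  using assms(2)
proof (induction r arbitrary: v)
  case 0
  then show ?case using deg_cyc[OF assms(1) 0] by (simp add: seqv_def)
next
  case (Suc r)
  have s: "(v+1) mod n < n" "(v+n-1) mod n < n" using assms by auto
  have p0: "portc n v 0 = (v+1) mod n" and p1: "portc n v 1 = (v+n-1) mod n"
    by (simp_all add: portc_def)
  have "(\<lambda>i. if i < deg (cycle_graph n) v
            then Some (alg_msg A (run A (cycle_graph n) idf (portc n) r (portc n v i))
              (backport (cycle_graph n) (portc n) (portc n v i) v)) else None)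
       = (\<lambda>i. if i < 2 then Some (alg_msg A (F A r (\<lambda>j. seqv n idf v (j + (if i = 0 then 1 else -1))))
                                  (if i = 0 then 1 else 0)) else None)"
    using Suc.IH[OF s(1)] Suc.IH[OF s(2)] deg_cyc[OF assms(1) Suc.prems]
      backport_succ[OF assms(1) Suc.prems] backport_pred[OF assms(1) Suc.prems]
      seqv_shift_succ[OF assms(1) Suc.prems] seqv_shift_pred[OF assms(1) Suc.prems]
    apply (intro ext)
    subgoal for i using p0 p1 by (cases "i = 0"; cases "i = 1") auto
    done
  then show ?case using Suc.IH[OF Suc.prems] by simp
qed



lemma graph_edges_finite: "finite (graph_edges n E)"
proof -
  have "graph_edges n E \<subseteq> (\<lambda>(u,v). {u,v}) ` ({..<n} \<times> {..<n})"
    unfolding graph_edges_def by auto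
  then show ?thesis by (rule finite_subset) auto
qed

lemma max_matching_ge:
  fixes n :: nat assumes "n \<ge> 3"
  shows "n div 2 \<le> max_matching_size n (cycle_graph n)"
proof -
  define M0 where "M0 = (\<lambda>i. {2*i, 2*i+1}) ` {..<n div 2}"
  have inj: "inj_on (\<lambda>i::nat. {2*i, 2*i+1}) {..<n div 2}"
    unfolding inj_on_def by (auto simp: doubleton_eq_iff)
  have cM0: "card M0 = n div 2" unfolding M0_def using card_image[OF inj] by simp
  have ism: "is_matching n (cycle_graph n) M0"
    unfolding is_matching_def
  proof
    show "M0 \<subseteq> graph_edges n (cycle_graph n)"
    proof
      fix e assume "e \<in> M0"
      then obtain i where i: "i < n div 2" "e = {2*i, 2*i+1}" unfolding M0_def by auto
      then have "2*i+1 < n" by linarith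
      then have "cycle_graph n (2*i) (2*i+1)" unfolding cycle_graph_def by auto
      then show "e \<in> graph_edges n (cycle_graph n)" unfolding graph_edges_def using i \<open>2*i+1<n\<close>
        by (intro CollectI exI[of _ "2*i"] exI[of _ "2*i+1"]) auto
    qed
    show "\<forall>e\<in>M0. \<forall>e'\<in>M0. e \<noteq> e' \<longrightarrow> e \<inter> e' = {}"
    proof (intro ballI impI)
      fix e e' assume "e \<in> M0" "e' \<in> M0" "e \<noteq> e'"
      then obtain i i' where ii: "e = {2*i, 2*i+1}" "e' = {2*i', 2*i'+1}" "i \<noteq> i'"
        unfolding M0_def by auto
      have "2*i \<noteq> 2*i'+1" "2*i+1 \<noteq> 2*i'" by presburger+
      then show "e \<inter> e' = {}" using ii by auto
    qed
  qed
  have fin: "finite (card ` {M. is_matching n (cycle_graph n) M})"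
  proof -
    have "{M. is_matching n (cycle_graph n) M} \<subseteq> Pow (graph_edges n (cycle_graph n))"
      unfolding is_matching_def by auto
    then show ?thesis using graph_edges_finite by (meson finite_Pow_iff finite_imageI finite_subset)
  qed
  have mem: "card M0 \<in> card ` {M. is_matching n (cycle_graph n) M}" using ism by blast
  show ?thesis unfolding max_matching_size_def using Max_ge[OF fin mem] cM0 by simp
qed

lemma doubleton_eq_v: "u \<noteq> v \<Longrightarrow> ({v, a} = {v, u}) \<longleftrightarrow> a = u"
  by (auto simp: doubleton_eq_iff)

locale okring =
  fixes \<rho> :: real and n :: nat and A :: local_alg and idf :: "nat \<Rightarrow> nat" and r :: nat
  assumes n3: "n \<ge> 3" and rho: "\<rho> \<ge> 1"
    and ok: "output_ok \<rho> n A (cycle_graph n) idf (portc n) r"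
begin

abbreviation "Ov v \<equiv> alg_out A (run A (cycle_graph n) idf (portc n) r v)"
abbreviation "sc v \<equiv> (v+1) mod n"
abbreviation "pc v \<equiv> (v+n-1) mod n"

lemma O_sub: "v < n \<Longrightarrow> Ov v \<subseteq> {0,1}"
  using ok deg_cyc[OF n3] unfolding output_ok_def by fastforce

lemma chosen_succ: assumes "v < n"
  shows "{v, sc v} \<in> chosen_edges A (cycle_graph n) idf (portc n) r v \<longleftrightarrow> 0 \<in> Ov v"
proof -
  have ne: "sc v \<noteq> v" "pc v \<noteq> sc v" using n3 assms succ_eq[of v n] pred_eq[of v n] by auto
  have "{v, sc v} \<in> chosen_edges A (cycle_graph n) idf (portc n) r v \<longleftrightarrow> (\<exists>i\<in>Ov v. portc n v i = sc v)"
    unfolding chosen_edges_def using doubleton_eq_v[OF ne(1)] by auto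
  also have "\<dots> \<longleftrightarrow> 0 \<in> Ov v" using O_sub[OF assms] ne by (auto simp: portc_def)
  finally show ?thesis .
qed

lemma chosen_pred: assumes "u < n"
  shows "{u, pc u} \<in> chosen_edges A (cycle_graph n) idf (portc n) r u \<longleftrightarrow> 1 \<in> Ov u"
proof -
  have ne: "pc u \<noteq> u" "pc u \<noteq> sc u" using n3 assms succ_eq[of u n] pred_eq[of u n] by auto
  have "{u, pc u} \<in> chosen_edges A (cycle_graph n) idf (portc n) r u \<longleftrightarrow> (\<exists>i\<in>Ov u. portc n u i = pc u)"
    unfolding chosen_edges_def using doubleton_eq_v[OF ne(1)] by auto
  also have "\<dots> \<longleftrightarrow> 1 \<in> Ov u" using O_sub[OF assms] ne by (auto simp: portc_def)
  finally show ?thesis .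
qed

lemma cons01: assumes "v < n" shows "0 \<in> Ov v \<longleftrightarrow> 1 \<in> Ov (sc v)"
proof -
  have u: "sc v < n" using n3 by auto
  have E: "cycle_graph n v (sc v)" using cyc_iff[OF n3 assms] by auto
  have pu: "pc (sc v) = v" using succ_pred[OF n3 assms] by simp
  have "{v, sc v} \<in> chosen_edges A (cycle_graph n) idf (portc n) r v \<longleftrightarrow>
        {v, sc v} \<in> chosen_edges A (cycle_graph n) idf (portc n) r (sc v)"
    using ok assms u E unfolding output_ok_def by blast
  moreover have "{v, sc v} = {sc v, pc (sc v)}" using pu by auto
  ultimately show ?thesis using chosen_succ[OF assms] chosen_pred[OF u] by simp
qed

abbreviation "MM \<equiv> (\<Union>v\<in>{..<n}. chosen_edges A (cycle_graph n) idf (portc n) r v)"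

lemma MM_matching: "is_matching n (cycle_graph n) MM"
  using ok unfolding output_ok_def approx_matching_def by blast

lemma neq2: "(v::nat) \<noteq> a \<Longrightarrow> b \<noteq> v \<Longrightarrow> {v, a} \<noteq> {a, b}"
  by auto

lemma nocons: assumes "v < n" shows "\<not> (0 \<in> Ov v \<and> 0 \<in> Ov (sc v))"
proof
  assume h: "0 \<in> Ov v \<and> 0 \<in> Ov (sc v)"
  have u: "sc v < n" using n3 by auto
  have e1: "{v, sc v} \<in> MM" using chosen_succ[OF assms] h assms by blast
  have e2: "{sc v, sc (sc v)} \<in> MM" using chosen_succ[OF u] h u by blast
  have "sc (sc v) \<noteq> v" using n3 assms succ_eq[of v n] succ_eq[of "sc v" n] by (auto split: if_splits)
  moreover have "v \<noteq> sc v" using n3 assms succ_eq[of v n] by auto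
  ultimately have "{v, sc v} \<noteq> {sc v, sc (sc v)}"
    using neq2[of v "sc v" "sc (sc v)"] by blast
  moreover have dj: "\<forall>e\<in>MM. \<forall>e'\<in>MM. e \<noteq> e' \<longrightarrow> e \<inter> e' = {}"
    using MM_matching unfolding is_matching_def by (rule conjunct2)
  ultimately have "{v, sc v} \<inter> {sc v, sc (sc v)} = {}" using bspec[OF bspec[OF dj e1] e2] by simp
  then show False by simp
qed

lemma MM_sub: "MM \<subseteq> (\<lambda>v. {v, sc v}) ` {v. v < n \<and> 0 \<in> Ov v}"
proof
  fix e assume "e \<in> MM"
  then obtain v i where v: "v < n" "i \<in> Ov v" "e = {v, portc n v i}"
    unfolding chosen_edges_def by auto
  show "e \<in> (\<lambda>v. {v, sc v}) ` {v. v < n \<and> 0 \<in> Ov v}"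
  proof (cases "i = 0")
    case True
    then have "e = {v, sc v}" using v(3) by (simp add: portc_def)
    moreover have "v \<in> {v. v < n \<and> 0 \<in> Ov v}" using v(1,2) True by blast
    ultimately show ?thesis by (rule image_eqI)
  next
    case False
    then have i1: "i = 1" using O_sub[OF v(1)] v(2) by auto
    have pv: "pc v < n" using n3 by auto
    have spv: "sc (pc v) = v" using succ_pred[OF n3 v(1)] by simp
    have "1 \<in> Ov (sc (pc v))" using i1 v(2) spv by simp
    then have z: "0 \<in> Ov (pc v)" using cons01[OF pv] by simp
    have ee: "e = {pc v, sc (pc v)}" unfolding spv using v(3) i1 by (auto simp: portc_def)
    have mem: "pc v \<in> {v. v < n \<and> 0 \<in> Ov v}" using z pv by blast
    show ?thesis by (rule image_eqI[where f="\<lambda>v. {v, sc v}", OF ee mem])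
  qed
qed

lemma count: "real (n div 2) / \<rho> \<le> real (card {v. v < n \<and> 0 \<in> Ov v})"
proof -
  have "real (max_matching_size n (cycle_graph n)) / \<rho> \<le> real (card MM)"
    using ok unfolding output_ok_def approx_matching_def by blast
  moreover have "real (n div 2) / \<rho> \<le> real (max_matching_size n (cycle_graph n)) / \<rho>"
    using max_matching_ge[OF n3] rho by (simp add: divide_right_mono)
  moreover have "card MM \<le> card {v. v < n \<and> 0 \<in> Ov v}"
  proof -
    have "card MM \<le> card ((\<lambda>v. {v, sc v}) ` {v. v < n \<and> 0 \<in> Ov v})"
      by (rule card_mono[OF _ MM_sub]) auto
    also have "\<dots> \<le> card {v. v < n \<and> 0 \<in> Ov v}" by (rule card_image_le) auto
    finally show ?thesis .
  qed
  ultimately show ?thesis by linarith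
qed

end


fun tow :: "nat \<Rightarrow> nat \<Rightarrow> nat" where
  "tow 0 c = c"
| "tow (Suc j) c = tow j (2^c)"

lemma sw_last: "sorted_wrt (<) xs \<Longrightarrow> x \<in> set xs \<Longrightarrow> x \<le> last (xs::nat list)"
  by (induction xs) (auto intro: less_imp_le)

lemma sw_snoc: "sorted_wrt (<) xs \<Longrightarrow> xs \<noteq> [] \<Longrightarrow> last xs < z \<Longrightarrow> sorted_wrt (<) (xs@[z::nat])"
  by (auto simp: sorted_wrt_append dest: sw_last)

lemma LS:
  fixes T :: "nat set" and f :: "nat list \<Rightarrow> nat"
  shows "finite T \<Longrightarrow>
   (\<forall>xs. length xs = Suc j \<and> sorted_wrt (<) xs \<and> set xs \<subseteq> T \<longrightarrow> f xs < c) \<Longrightarrow>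
   (\<forall>ys. length ys = Suc (Suc j) \<and> sorted_wrt (<) ys \<and> set ys \<subseteq> T \<longrightarrow> f (butlast ys) \<noteq> f (tl ys)) \<Longrightarrow>
   card T \<le> tow j c"
proof (induction j arbitrary: f c)
  case 0
  have "inj_on (\<lambda>x. f [x]) T"
  proof (rule inj_onI)
    fix x y assume xy: "x \<in> T" "y \<in> T" "f [x] = f [y]"
    show "x = y"
    proof (rule ccontr)
      assume "x \<noteq> y"
      then consider "x < y" | "y < x" by linarith
      then show False
      proof cases
        case 1 then show False using "0.prems"(3)[rule_format, of "[x,y]"] xy by auto
      next
        case 2 then show False using "0.prems"(3)[rule_format, of "[y,x]"] xy by auto
      qed
    qed
  qed
  moreover have "(\<lambda>x. f [x]) ` T \<subseteq> {..<c}" using "0.prems"(2) by auto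
  ultimately have "card T \<le> card {..<c}" by (rule card_inj_on_le) auto
  then show ?case by simp
next
  case (Suc j)
  obtain h where h: "bij_betw h (Pow {..<c}) {0..<card (Pow {..<c})}"
    using ex_bij_betw_finite_nat[of "Pow {..<c}"] by auto
  have cp: "card (Pow {..<c}) = 2^c" by (simp add: card_Pow)
  define S where "S xs = {f (xs @ [z]) | z. z \<in> T \<and> last xs < z}" for xs
  define g where "g xs = h (S xs)" for xs
  have Ssub: "S xs \<subseteq> {..<c}" if "length xs = Suc j" "sorted_wrt (<) xs" "set xs \<subseteq> T" for xs
  proof
    fix a assume "a \<in> S xs"
    then obtain z where z: "a = f (xs @ [z])" "z \<in> T" "last xs < z" unfolding S_def by auto
    have "xs \<noteq> []" using that by auto
    then have "sorted_wrt (<) (xs @ [z])" using that z sw_snoc by blast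
    then show "a \<in> {..<c}" using Suc.prems(2) that z by auto
  qed
  have "card T \<le> tow j (2^c)"
  proof (rule Suc.IH[of g])
    show "finite T" by fact
    show "\<forall>xs. length xs = Suc j \<and> sorted_wrt (<) xs \<and> set xs \<subseteq> T \<longrightarrow> g xs < 2 ^ c"
    proof (intro allI impI)
      fix xs assume a: "length xs = Suc j \<and> sorted_wrt (<) xs \<and> set xs \<subseteq> T"
      then have "S xs \<in> Pow {..<c}" using Ssub by auto
      then show "g xs < 2^c" unfolding g_def using h cp by (auto simp: bij_betw_def)
    qed
    show "\<forall>ys. length ys = Suc (Suc j) \<and> sorted_wrt (<) ys \<and> set ys \<subseteq> T \<longrightarrow> g (butlast ys) \<noteq> g (tl ys)"
    proof (intro allI impI notI)
      fix ys assume a: "length ys = Suc (Suc j) \<and> sorted_wrt (<) ys \<and> set ys \<subseteq> T"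
        and eq: "g (butlast ys) = g (tl ys)"
      have sb1: "sorted_wrt (<) (butlast ys)" using a by (simp add: butlast_conv_take sorted_wrt_take)
      have sb2: "sorted_wrt (<) (tl ys)" using a by (cases ys) auto
      note sb = sb1 sb2
      have lb: "length (butlast ys) = Suc j" "length (tl ys) = Suc j" using a by auto
      have stb: "set (butlast ys) \<subseteq> T" "set (tl ys) \<subseteq> T" using a
        by (auto dest: in_set_butlastD) (metis list.set_sel(2) list.sel(2) subsetD)
      have "S (butlast ys) = S (tl ys)"
        using eq h Ssub[OF lb(1) sb(1) stb(1)] Ssub[OF lb(2) sb(2) stb(2)] unfolding g_def bij_betw_def inj_on_def
        by auto
      have ysne: "ys \<noteq> []" using a by auto
      have ysd: "ys = butlast ys @ [last ys]" using ysne by simp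
      have lastlt: "last (butlast ys) < last ys"
      proof -
        have "sorted_wrt (<) (butlast ys @ [last ys])" using a ysd by metis
        moreover have "butlast ys \<noteq> []" using lb(1) by (metis list.size(3) nat.distinct(1))
        ultimately show ?thesis by (auto simp: sorted_wrt_append)
      qed
      have "f ys \<in> S (butlast ys)" unfolding S_def
        using lastlt a ysne by (subst ysd) (auto intro!: exI[of _ "last ys"])
      then have "f ys \<in> S (tl ys)" using \<open>S (butlast ys) = S (tl ys)\<close> by simp
      then obtain z where z: "f ys = f (tl ys @ [z])" "z \<in> T" "last (tl ys) < z" unfolding S_def by auto
      have ltl: "last (tl ys) = last ys" using a by (cases ys) auto
      define zs where "zs = ys @ [z]"
      have "sorted_wrt (<) zs" unfolding zs_def using a z ltl ysne sw_snoc by metis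
      moreover have "length zs = Suc (Suc (Suc j))" "set zs \<subseteq> T" unfolding zs_def using a z by auto
      ultimately have "f (butlast zs) \<noteq> f (tl zs)" using Suc.prems(3) by blast
      moreover have "butlast zs = ys" "tl zs = tl ys @ [z]" unfolding zs_def using ysne by auto
      ultimately show False using z by simp
    qed
  qed
  then show ?case by simp
qed

definition winR :: "nat \<Rightarrow> nat \<Rightarrow> nat list \<Rightarrow> nat list" where
  "winR R k y = take (2*R+1) (drop k y)"

definition gcR :: "nat \<Rightarrow> (nat list \<Rightarrow> bool) \<Rightarrow> nat list \<Rightarrow> nat" where
  "gcR R mw Q = card {k. k + 2*R < length Q \<and> \<not> mw (winR R k Q)}"

definition denseR :: "nat \<Rightarrow> nat \<Rightarrow> (nat list \<Rightarrow> bool) \<Rightarrow> nat set \<Rightarrow> bool" where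
  "denseR R L mw T \<longleftrightarrow> (\<forall>y. length y = L + 2*R \<and> sorted_wrt (<) y \<and> set y \<subseteq> T \<longrightarrow> (\<exists>k<L. mw (winR R k y)))"

lemma winR_take: "k + 2*R + 1 \<le> W \<Longrightarrow> winR R k (take W y) = winR R k y"
  unfolding winR_def by (simp add: take_drop min_def)

lemma winR_tl: "winR R k (tl y) = winR R (Suc k) y"
  unfolding winR_def by (simp add: drop_Suc)

lemma dense_small:
  fixes T :: "nat set" and mw :: "nat list \<Rightarrow> bool"
  assumes L1: "L \<ge> 1"
    and NC: "\<forall>z. sorted_wrt (<) z \<and> length z = 2*R+2 \<and> set z \<subseteq> T \<longrightarrow> \<not> (mw (take (2*R+1) z) \<and> mw (drop 1 z))"
    and fin: "finite T" and dn: "denseR R L mw T"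
  shows "card T \<le> tow (L + 2*R - 1) L"
proof -
  define W where "W = L + 2*R"
  define d where "d y = (LEAST k. mw (winR R k y))" for y
  have dlt: "d y < L \<and> mw (winR R (d y) y) \<and> (\<forall>k<d y. \<not> mw (winR R k y))"
    if yy: "length y = W" "sorted_wrt (<) y" "set y \<subseteq> T" for y
  proof -
    obtain k where k: "k < L" "mw (winR R k y)" using dn yy unfolding denseR_def W_def by blast
    have "mw (winR R (d y) y)" unfolding d_def using k(2) by (rule LeastI)
    moreover have "d y \<le> k" unfolding d_def using k(2) by (rule Least_le)
    moreover have "\<forall>j<d y. \<not> mw (winR R j y)" unfolding d_def using not_less_Least by blast
    ultimately show ?thesis using k by auto
  qed
  have W1: "Suc (W - 1) = W" using L1 unfolding W_def by simp
  have "card T \<le> tow (W - 1) L"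
  proof (rule LS[of T "W - 1" d L])
    show "finite T" by fact
    show "\<forall>xs. length xs = Suc (W - 1) \<and> sorted_wrt (<) xs \<and> set xs \<subseteq> T \<longrightarrow> d xs < L"
      using dlt W1 by auto
    show "\<forall>ys. length ys = Suc (Suc (W - 1)) \<and> sorted_wrt (<) ys \<and> set ys \<subseteq> T \<longrightarrow> d (butlast ys) \<noteq> d (tl ys)"
    proof (intro allI impI notI)
      fix ys assume a: "length ys = Suc (Suc (W - 1)) \<and> sorted_wrt (<) ys \<and> set ys \<subseteq> T"
        and eq: "d (butlast ys) = d (tl ys)"
      have lys: "length ys = Suc W" using a W1 by simp
      have bl: "butlast ys = take W ys" using lys by (simp add: butlast_conv_take)
      have b1: "length (butlast ys) = W" "sorted_wrt (<) (butlast ys)" "set (butlast ys) \<subseteq> T"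
        using a lys by (auto simp: bl sorted_wrt_take dest: in_set_takeD)
      have b2: "length (tl ys) = W" "sorted_wrt (<) (tl ys)" "set (tl ys) \<subseteq> T"
        using a lys by (cases ys; auto)+
      note D1 = dlt[OF b1] and D2 = dlt[OF b2]
      define e where "e = d (butlast ys)"
      have eL: "e < L" using D1 e_def by simp
      have wb: "winR R k (butlast ys) = winR R k ys" if "k < L" for k
        unfolding bl using that by (intro winR_take) (simp add: W_def)
      have m1: "mw (winR R e ys)" using D1 wb[OF eL] e_def by simp
      have m2: "mw (winR R (Suc e) ys)" using D2 eq e_def winR_tl by simp
      show False
      proof (cases e)
        case 0
        define z where "z = take (2*R+2) ys"
        have "sorted_wrt (<) z \<and> length z = 2*R+2 \<and> set z \<subseteq> T"
          using a lys L1 unfolding z_def W_def by (auto simp: sorted_wrt_take dest: in_set_takeD)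
        moreover have "take (2*R+1) z = winR R 0 ys" unfolding z_def winR_def by simp
        moreover have "drop 1 z = winR R 1 ys" unfolding z_def winR_def by (simp add: drop_take)
        ultimately show False using NC m1 m2 0 by auto
      next
        case (Suc e')
        have lt: "e' < d (tl ys)" using eq e_def Suc by simp
        have "\<not> mw (winR R (Suc e') ys)" using D2 lt winR_tl by auto
        then show False using m1 Suc by simp
      qed
    qed
  qed
  then show ?thesis unfolding W_def .
qed


lemma gc_append:
  assumes lB: "length B = L + 2*R" and gap: "\<forall>k<L. \<not> mw (winR R k B)"
  shows "L + gcR R mw Q' \<le> gcR R mw (B @ Q')"
proof -
  define G' where "G' = {k. k + 2*R < length Q' \<and> \<not> mw (winR R k Q')}"
  define G where "G = {k. k + 2*R < length (B @ Q') \<and> \<not> mw (winR R k (B @ Q'))}"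
  have w1: "winR R k (B @ Q') = winR R k B" if "k < L" for k
    using that lB unfolding winR_def by simp
  have w2: "winR R (L + 2*R + k) (B @ Q') = winR R k Q'" for k
    using lB unfolding winR_def by simp
  have sub: "{..<L} \<union> (\<lambda>k. L + 2*R + k) ` G' \<subseteq> G"
    unfolding G_def G'_def using w1 w2 gap lB by auto
  have fG: "finite G" unfolding G_def by (rule finite_subset[of _ "{..<length (B@Q')}"]) auto
  have fG': "finite G'" unfolding G'_def by (rule finite_subset[of _ "{..<length Q'}"]) auto
  have "card ({..<L} \<union> (\<lambda>k. L + 2*R + k) ` G') = L + card G'"
    by (subst card_Un_disjoint) (auto simp: fG' card_image inj_on_def)
  then have "L + card G' \<le> card G" using card_mono[OF fG sub] by simp
  then show ?thesis unfolding gcR_def G_def G'_def .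
qed

lemma GB:
  fixes mw :: "nat list \<Rightarrow> bool" and U :: "nat set"
  assumes L1: "L \<ge> 1"
    and NC: "\<forall>z. sorted_wrt (<) z \<and> length z = 2*R+2 \<and> set z \<subseteq> U \<longrightarrow> \<not> (mw (take (2*R+1) z) \<and> mw (drop 1 z))"
  shows "finite T \<Longrightarrow> T \<subseteq> U \<Longrightarrow> \<exists>Q. distinct Q \<and> set Q = T \<and>
           L * card T \<le> (L + 2*R) * gcR R mw Q + L * (tow (L + 2*R - 1) L + 1)"
proof (induction "card T" arbitrary: T rule: less_induct)
  case less
  show ?case
  proof (cases "card T \<le> tow (L + 2*R - 1) L")
    case True
    have "L * card T \<le> L * (tow (L + 2*R - 1) L + 1)" using True by (intro mult_le_mono2) simp
    then have "L * card T \<le> (L + 2*R) * gcR R mw (sorted_list_of_set T) + L * (tow (L + 2*R - 1) L + 1)"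
      by linarith
    then show ?thesis using True less.prems
      by (intro exI[of _ "sorted_list_of_set T"]) auto
  next
    case False
    have NCT: "\<forall>z. sorted_wrt (<) z \<and> length z = 2*R+2 \<and> set z \<subseteq> T \<longrightarrow> \<not> (mw (take (2*R+1) z) \<and> mw (drop 1 z))"
      using NC less.prems by blast
    have "\<not> denseR R L mw T" using dense_small[OF L1 NCT less.prems(1)] False by auto
    then obtain y where y: "length y = L + 2*R" "sorted_wrt (<) y" "set y \<subseteq> T"
      and gap: "\<forall>k<L. \<not> mw (winR R k y)"
      unfolding denseR_def by blast
    have dy: "distinct y" using y(2) strict_sorted_iff by blast
    define T' where "T' = T - set y"
    have cy: "card (set y) = L + 2*R" using distinct_card[OF dy] y(1) by simp
    have cT': "card T' = card T - (L + 2*R)" unfolding T'_def using card_Diff_subset[OF _ y(3)] cy by simp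
    have cTy: "card T \<ge> L + 2*R" using card_mono[OF less.prems(1) y(3)] cy by simp
    have "card T' < card T" using cT' cTy L1 by simp
    moreover have "finite T'" "T' \<subseteq> U" using less.prems unfolding T'_def by auto
    ultimately obtain Q' where Q': "distinct Q'" "set Q' = T'"
      "L * card T' \<le> (L + 2*R) * gcR R mw Q' + L * (tow (L + 2*R - 1) L + 1)"
      using less.hyps by blast
    define Q where "Q = y @ Q'"
    have "distinct Q" unfolding Q_def using dy Q' T'_def by auto
    moreover have "set Q = T" unfolding Q_def using Q' T'_def y(3) by auto
    moreover have "L * card T \<le> (L + 2*R) * gcR R mw Q + L * (tow (L + 2*R - 1) L + 1)"
    proof -
      have g: "L + gcR R mw Q' \<le> gcR R mw Q" unfolding Q_def by (rule gc_append[OF y(1) gap])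
      have "card T = card T' + (L + 2*R)" using cT' cTy by simp
      then have "L * card T = L * card T' + L * (L + 2*R)" by (simp add: distrib_left)
      also have "\<dots> \<le> (L + 2*R) * gcR R mw Q' + L * (tow (L + 2*R - 1) L + 1) + (L + 2*R) * L"
        using Q'(3) by simp
      also have "\<dots> = (L + 2*R) * (L + gcR R mw Q') + L * (tow (L + 2*R - 1) L + 1)"
        by (simp add: algebra_simps)
      also have "\<dots> \<le> (L + 2*R) * gcR R mw Q + L * (tow (L + 2*R - 1) L + 1)"
        using g by simp
      finally show ?thesis .
    qed
    ultimately show ?thesis by blast
  qed
qed



definition perm :: "nat \<Rightarrow> nat list \<Rightarrow> bool" where
  "perm n P \<longleftrightarrow> distinct P \<and> set P = {..<n}"

lemma perm_len: "perm n P \<Longrightarrow> length P = n"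
  unfolding perm_def using distinct_card by fastforce

definition mkperm :: "nat \<Rightarrow> nat list \<Rightarrow> nat list" where
  "mkperm n z = z @ sorted_list_of_set ({..<n} - set z)"

lemma mkperm_perm: "distinct z \<Longrightarrow> set z \<subseteq> {..<n} \<Longrightarrow> perm n (mkperm n z)"
  unfolding perm_def mkperm_def by auto

definition mwF :: "local_alg \<Rightarrow> nat \<Rightarrow> nat list \<Rightarrow> bool" where
  "mwF A R w \<longleftrightarrow> 0 \<in> alg_out A (F A R (\<lambda>j. w ! nat (j + int R)))"

lemma ring_window:
  fixes n v R :: nat
  assumes n3: "n \<ge> 3" and P: "perm n P" and v: "R \<le> v" "v + R < n"
  shows "run A (cycle_graph n) (\<lambda>i. P ! i) (portc n) R v = F A R (\<lambda>j. winR R (v - R) P ! nat (j + int R))"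
proof -
  have vn: "v < n" using v by simp
  have lP: "length P = n" using perm_len[OF P] .
  have "F A R (seqv n (\<lambda>i. P ! i) v) = F A R (\<lambda>j. winR R (v - R) P ! nat (j + int R))"
  proof (rule F_local)
    fix j :: int assume j: "\<bar>j\<bar> \<le> int R"
    have a: "0 \<le> int v + j" "int v + j < int n" using j v by auto
    then have "(int v + j) mod int n = int v + j" by simp
    then have "seqv n (\<lambda>i. P ! i) v j = P ! nat (int v + j)" unfolding seqv_def by simp
    moreover have "nat (int v + j) = (v - R) + nat (j + int R)" using j v by auto
    moreover have "winR R (v - R) P ! nat (j + int R) = P ! ((v - R) + nat (j + int R))"
      unfolding winR_def using j v lP by (auto simp: nth_take nth_drop)
    ultimately show "seqv n (\<lambda>i. P ! i) v j = winR R (v - R) P ! nat (j + int R)" by simp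
  qed
  then show ?thesis using run_F[OF n3 vn] by simp
qed

lemma valid_ids_perm:
  assumes "C \<ge> 1" "perm n P"
  shows "valid_ids C n (\<lambda>i. P ! i)"
proof -
  have lP: "length P = n" using perm_len[OF assms(2)] .
  have "inj_on (\<lambda>i. P ! i) {..<n}" using assms(2) lP unfolding perm_def
    by (metis inj_on_nth lessThan_iff)
  moreover have "P ! v < n ^ C" if "v < n" for v
  proof -
    have "P ! v \<in> set P" using that lP by simp
    then have "P ! v < n" using assms(2) unfolding perm_def by auto
    moreover have "n \<le> n ^ C" using power_increasing[of 1 C n] assms(1) that by simp
    ultimately show ?thesis by simp
  qed
  ultimately show ?thesis unfolding valid_ids_def by auto
qed

locale allok =
  fixes \<rho> :: real and n :: nat and A :: local_alg and R :: nat
  assumes n3: "n \<ge> 3" and rho: "\<rho> \<ge> 1"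
    and ok: "\<And>P. perm n P \<Longrightarrow> output_ok \<rho> n A (cycle_graph n) (\<lambda>i. P ! i) (portc n) R"
begin

lemma okr: "perm n P \<Longrightarrow> okring \<rho> n A (\<lambda>i. P ! i) R"
  unfolding okring_def using n3 rho ok by auto

lemma O_win:
  assumes P: "perm n P" and v: "R \<le> v" "v + R < n"
  shows "0 \<in> alg_out A (run A (cycle_graph n) (\<lambda>i. P ! i) (portc n) R v) \<longleftrightarrow> mwF A R (winR R (v - R) P)"
  unfolding mwF_def ring_window[OF n3 P v] ..

lemma NC_sorted:
  assumes z: "sorted_wrt (<) z" "length z = 2*R+2" "set z \<subseteq> {..<n}" and big: "2*R + 2 < n"
  shows "\<not> (mwF A R (take (2*R+1) z) \<and> mwF A R (drop 1 z))"
proof -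
  have dz: "distinct z" using z(1) strict_sorted_iff by blast
  define P where "P = mkperm n z"
  have P: "perm n P" unfolding P_def by (rule mkperm_perm[OF dz z(3)])
  interpret okring \<rho> n A "\<lambda>i. P ! i" R by (rule okr[OF P])
  have w0: "winR R 0 P = take (2*R+1) z" unfolding P_def mkperm_def winR_def using z(2) by simp
  have w1: "winR R 1 P = drop 1 z" unfolding P_def mkperm_def winR_def using z(2) by simp
  have e0: "0 \<in> Ov R \<longleftrightarrow> mwF A R (take (2*R+1) z)" using O_win[OF P, of R] big w0 by simp
  have e1: "0 \<in> Ov (R+1) \<longleftrightarrow> mwF A R (drop 1 z)" using O_win[OF P, of "R+1"] big w1 by simp
  have "sc R = R + 1" using big by simp
  then show ?thesis using nocons[of R] big e0 e1 by auto
qed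

lemma count_gc:
  assumes P: "perm n P" and big: "2*R < n"
  shows "real (n div 2) / \<rho> \<le> real n - real (gcR R (mwF A R) P)"
proof -
  interpret okring \<rho> n A "\<lambda>i. P ! i" R by (rule okr[OF P])
  have lP: "length P = n" using perm_len[OF P] .
  define G where "G = {k. k + 2*R < length P \<and> \<not> mwF A R (winR R k P)}"
  define Y where "Y = {v. v < n \<and> 0 \<in> Ov v}"
  define Nn where "Nn = {v. v < n \<and> 0 \<notin> Ov v}"
  have "(\<lambda>k. k + R) ` G \<subseteq> Nn"
  proof
    fix x assume "x \<in> (\<lambda>k. k + R) ` G"
    then obtain k where k: "x = k + R" "k + 2*R < n" "\<not> mwF A R (winR R k P)" unfolding G_def lP by auto
    have "0 \<notin> Ov (k + R)" using O_win[OF P, of "k+R"] k by simp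
    then show "x \<in> Nn" unfolding Nn_def using k by simp
  qed
  moreover have "finite Nn" unfolding Nn_def by simp
  ultimately have "card ((\<lambda>k. k + R) ` G) \<le> card Nn" by (simp add: card_mono)
  moreover have "card ((\<lambda>k. k + R) ` G) = card G" by (rule card_image) (simp add: inj_on_def)
  ultimately have "card G \<le> card Nn" by simp
  moreover have "card Y + card Nn = n"
  proof -
    have "Y \<union> Nn = {..<n}" "Y \<inter> Nn = {}" unfolding Y_def Nn_def by auto
    then show ?thesis by (metis card_Un_disjoint card_lessThan finite_Un finite_lessThan)
  qed
  moreover have "real (n div 2) / \<rho> \<le> real (card Y)" unfolding Y_def by (rule count)
  ultimately show ?thesis unfolding gcR_def G_def by linarith
qed

lemma general_contra:
  fixes L :: nat
  assumes L1: "L \<ge> 1" and big: "2*R + 2 < n"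
    and c1: "16 * \<rho> * real R \<le> real L"
    and c2: "8 * \<rho> * real (tow (L + 2*R - 1) L + 1) \<le> real n"
  shows False
proof -
  have NC: "\<forall>z. sorted_wrt (<) z \<and> length z = 2*R+2 \<and> set z \<subseteq> {..<n} \<longrightarrow>
      \<not> (mwF A R (take (2*R+1) z) \<and> mwF A R (drop 1 z))"
    using NC_sorted big by blast
  obtain Q where Q: "distinct Q" "set Q = {..<n}"
    "L * card {..<n} \<le> (L + 2*R) * gcR R (mwF A R) Q + L * (tow (L + 2*R - 1) L + 1)"
    using GB[OF L1 NC, of "{..<n}"] by auto
  have P: "perm n Q" unfolding perm_def using Q by simp
  define g where "g = real (gcR R (mwF A R) Q)"
  define l where "l = real L"
  define r2 where "r2 = 2 * real R"
  define m where "m = real (tow (L + 2*R - 1) L + 1)"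
  define nn where "nn = real n"
  define p where "p = \<rho>"
  have h1: "l * nn \<le> (l + r2) * g + l * m"
    using Q(3) unfolding l_def nn_def g_def r2_def m_def
    by (metis (mono_tags, lifting) card_lessThan of_nat_add of_nat_le_iff of_nat_mult of_nat_numeral)
  have hc: "real (n div 2) / \<rho> \<le> nn - g" using count_gc[OF P] big unfolding nn_def g_def by simp
  have p1: "p \<ge> 1" using rho p_def by simp
  have hc2: "real (n div 2) \<le> p * (nn - g)" using hc p1 unfolding p_def by (simp add: divide_le_eq mult.commute)
  have c1': "8 * p * r2 \<le> l" using c1 unfolding p_def r2_def l_def by simp
  have c2': "8 * p * m \<le> nn" using c2 unfolding p_def m_def nn_def by simp
  have l1: "l \<ge> 1" using L1 l_def by simp
  have r0: "r2 \<ge> 0" unfolding r2_def by simp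
  have n0: "nn \<ge> 3" using n3 unfolding nn_def by simp
  have step1: "(l + r2) * (nn - g) \<le> r2 * nn + l * m" using h1 by (simp add: algebra_simps)
  have step2: "8 * p * ((l + r2) * (nn - g)) \<le> 8 * p * (r2 * nn + l * m)"
    using step1 p1 by (intro mult_left_mono) auto
  have s3: "8 * p * r2 * nn \<le> l * nn" using c1' n0 by (intro mult_right_mono) auto
  have s4: "l * (8 * p * m) \<le> l * nn" using c2' l1 by (intro mult_left_mono) auto
  have step3: "8 * p * ((l + r2) * (nn - g)) \<le> 2 * (l + r2) * nn"
  proof -
    have e: "8 * p * (r2 * nn + l * m) = 8 * p * r2 * nn + l * (8 * p * m)" by (simp add: algebra_simps)
    have f: "2 * l * nn \<le> 2 * (l + r2) * nn" using r0 n0 by (intro mult_right_mono) auto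
    have "8 * p * ((l + r2) * (nn - g)) \<le> 8 * p * r2 * nn + l * (8 * p * m)" using step2 e by simp
    also have "\<dots> \<le> l * nn + l * nn" using s3 s4 by (rule add_mono)
    also have "\<dots> = 2 * l * nn" by simp
    finally have "8 * p * ((l + r2) * (nn - g)) \<le> 2 * l * nn" .
    then show ?thesis using f by linarith
  qed
  have step4: "(2 * (l + r2)) * (4 * p * (nn - g)) \<le> (2 * (l + r2)) * nn"
    using step3 by (simp add: algebra_simps)
  have pos: "2 * (l + r2) > 0" using l1 r0 by simp
  have step5: "4 * p * (nn - g) \<le> nn" using step4 pos by (simp add: mult_le_cancel_left_pos)
  have dv: "2 * real (n div 2) \<ge> nn - 1" unfolding nn_def by linarith
  show False using hc2 step5 dv n0 by linarith
qed

lemma zero_contra: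
  assumes R0: "R = 0"
  shows False
proof -
  define Oi where "Oi x = alg_out A (alg_init A x 2)" for x
  have Orun: "alg_out A (run A (cycle_graph n) (\<lambda>i. P ! i) (portc n) R v) = Oi (P ! v)" if "v < n" for P v
    using run_F[OF n3 that, of A "\<lambda>i. P ! i" R] R0 that unfolding Oi_def seqv_def by simp
  obtain x where x: "x < n" "0 \<in> Oi x"
  proof -
    define P where "P = mkperm n []"
    have P: "perm n P" unfolding P_def by (rule mkperm_perm) auto
    interpret okring \<rho> n A "\<lambda>i. P ! i" R by (rule okr[OF P])
    have "real (n div 2) / \<rho> > 0" using n3 rho by simp
    then have "card {v. v < n \<and> 0 \<in> Ov v} > 0" using count by linarith
    then obtain v where v: "v < n" "0 \<in> Ov v" by (metis (no_types, lifting) card_gt_0_iff mem_Collect_eq ex_in_conv)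
    have "P ! v < n" using P v(1) perm_len[OF P] unfolding perm_def by (metis lessThan_iff nth_mem)
    then show ?thesis using that v Orun by auto
  qed
  define z :: nat where "z = (if x = 0 then 1 else 0)"
  define w :: nat where "w = (if x = 2 then 1 else 2)"
  have zw: "z \<in> {..<n} - {x}" "w \<in> {..<n} - {x}" "z \<noteq> w"
    unfolding z_def w_def using n3 by auto
  have ow: "1 \<in> Oi w"
  proof -
    define P where "P = mkperm n [x, w]"
    have P: "perm n P" unfolding P_def using zw x by (intro mkperm_perm) auto
    interpret okring \<rho> n A "\<lambda>i. P ! i" R by (rule okr[OF P])
    have "0 \<in> Ov 0 \<longleftrightarrow> 1 \<in> Ov (sc 0)" using cons01[of 0] n3 by simp
    moreover have "sc 0 = 1" using n3 by simp
    ultimately show ?thesis using Orun[OF _, of 0 P] Orun[of 1 P] n3 x unfolding P_def mkperm_def by simp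
  qed
  define P where "P = mkperm n [x, z, w]"
  have P: "perm n P" unfolding P_def using zw x by (intro mkperm_perm) auto
  interpret okring \<rho> n A "\<lambda>i. P ! i" R by (rule okr[OF P])
  have s1: "sc 1 = 2" "sc 0 = 1" using n3 by auto
  have o0: "Ov 0 = Oi x" "Ov 1 = Oi z" "Ov 2 = Oi w" using Orun[of 0 P] Orun[of 1 P] Orun[of 2 P] n3
    unfolding P_def mkperm_def by auto
  have "0 \<in> Ov 1" using cons01[of 1] n3 s1 o0 ow by (simp add: numeral_2_eq_2)
  moreover have "0 \<in> Ov 0" using o0 x by simp
  ultimately show False using nocons[of 0] n3 s1 by simp
qed

end


fun twrn :: "nat \<Rightarrow> nat" where
  "twrn 0 = 1"
| "twrn (Suc k) = 2 ^ twrn k"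

lemma ls1: "(\<forall>i\<le>k. (log 2 ^^ i) x > 1) \<Longrightarrow> x > real (twrn k)"
proof (induction k arbitrary: x)
  case 0
  then show ?case by auto
next
  case (Suc k)
  have x1: "x > 1" using Suc.prems[rule_format, of 0] by simp
  have "\<forall>i\<le>k. (log 2 ^^ i) (log 2 x) > 1"
  proof (intro allI impI)
    fix i assume "i \<le> k"
    then have "(log 2 ^^ Suc i) x > 1" using Suc.prems by auto
    then show "(log 2 ^^ i) (log 2 x) > 1" by (simp add: funpow_Suc_right del: funpow.simps)
  qed
  then have "log 2 x > real (twrn k)" by (rule Suc.IH)
  then have "2 powr real (twrn k) < x" using x1 by (simp add: less_log_iff)
  then show ?case by (simp add: powr_realpow)
qed

lemma ls2: "k < log_star n \<Longrightarrow> real n > real (twrn k)"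
proof -
  assume k: "k < log_star n"
  have "\<forall>i\<le>k. (log 2 ^^ i) (real n) > 1"
  proof (intro allI impI)
    fix i assume "i \<le> k"
    then have "i < (LEAST k. ((log 2) ^^ k) (real n) \<le> 1)" using k unfolding log_star_def by simp
    then have "\<not> ((log 2) ^^ i) (real n) \<le> 1" by (rule not_less_Least)
    then show "(log 2 ^^ i) (real n) > 1" by simp
  qed
  then show ?thesis by (rule ls1)
qed

lemma twrn_gt: "k < twrn k"
proof (induction k)
  case 0 then show ?case by simp
next
  case (Suc k)
  have "twrn k < 2 ^ twrn k" by (rule less_exp)
  then show ?case using Suc by (simp only: twrn.simps)
qed

lemma twrn_mono: "a \<le> b \<Longrightarrow> twrn a \<le> twrn b"
proof (induction b)
  case 0 then show ?case by simp
next
  case (Suc b)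
  show ?case
  proof (cases "a = Suc b")
    case False
    then have "twrn a \<le> twrn b" using Suc by simp
    also have "\<dots> \<le> twrn (Suc b)" using less_exp[of "twrn b"] by simp
    finally show ?thesis .
  qed simp
qed

lemma tow_le: "c \<le> twrn d \<Longrightarrow> tow j c \<le> twrn (d + j)"
proof (induction j arbitrary: c d)
  case 0 then show ?case by simp
next
  case (Suc j)
  have "2 ^ c \<le> twrn (Suc d)" using Suc.prems by simp
  then have "tow j (2^c) \<le> twrn (Suc d + j)" by (rule Suc.IH)
  then show ?case by simp
qed

lemma sq_le_exp: "a \<ge> 4 \<Longrightarrow> a * a \<le> (2::nat) ^ a"
proof (induction a rule: nat_induct_at_least)
  case base then show ?case by simp
next
  case (Suc a)
  have "4 * a \<le> a * a" using Suc.hyps by (intro mult_le_mono1)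
  moreover have "Suc a * Suc a = a * a + 2 * a + 1" by simp
  ultimately have "Suc a * Suc a \<le> a * a + a * a" using Suc.hyps by linarith
  also have "\<dots> \<le> 2 ^ a + 2 ^ a" using Suc.IH by simp
  finally show ?case by simp
qed

lemma param_bound:
  fixes R0 p L X n :: nat and \<rho> :: real
  assumes R1: "R0 \<ge> 1" and p1: "p \<ge> 1" and Ld: "L = 16 * R0 * p"
    and Xd: "X = L + (L + 2*R0 - 1)" and Xl: "X + 1 < log_star n" and rp: "\<rho> \<le> real p"
    and rho: "\<rho> \<ge> 1"
  shows "2*R0 + 2 < n" "8 * \<rho> * real (tow (L + 2*R0 - 1) L + 1) \<le> real n"
proof -
  define t where "t = twrn X"
  have nt: "real n > real (twrn (X + 1))" using ls2[OF Xl] .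
  have tX: "X < t" unfolding t_def by (rule twrn_gt)
  have L16: "L \<ge> 16" using R1 p1 Ld by (metis le_trans mult_le_mono mult_1_right one_le_mult_iff
        le_add1 mult.commute nat_mult_1 order_refl)
  have XL: "L \<le> X" using Xd by simp
  have t4: "t \<ge> 4" using tX XL L16 by simp
  have "tow (L + 2*R0 - 1) L \<le> twrn (L + (L + 2*R0 - 1))"
    by (rule tow_le) (simp add: less_imp_le twrn_gt)
  then have towt: "tow (L + 2*R0 - 1) L \<le> t" unfolding t_def Xd by simp
  have "8 * p \<le> L" using Ld R1 by (simp add: mult_le_mono)
  then have p8: "8 * p \<le> X" using XL by simp
  have "8 * p * (tow (L + 2*R0 - 1) L + 1) \<le> X * (t + 1)"
    using p8 towt by (intro mult_le_mono) auto
  also have "\<dots> \<le> (t - 1) * (t + 1)" using tX by (intro mult_le_mono) auto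
  also have "\<dots> \<le> t * t" by (simp add: algebra_simps)
  also have "\<dots> \<le> 2 ^ t" by (rule sq_le_exp[OF t4])
  also have "\<dots> = twrn (X + 1)" unfolding t_def by simp
  finally have nat1: "8 * p * (tow (L + 2*R0 - 1) L + 1) \<le> twrn (X + 1)" .
  have "8 * \<rho> * real (tow (L + 2*R0 - 1) L + 1) \<le> 8 * real p * real (tow (L + 2*R0 - 1) L + 1)"
    using rp by (intro mult_right_mono) auto
  also have "\<dots> \<le> real (twrn (X + 1))" using nat1 by (metis of_nat_le_iff of_nat_mult of_nat_numeral)
  finally have "8 * \<rho> * real (tow (L + 2*R0 - 1) L + 1) \<le> real (twrn (X + 1))" .
  then show "8 * \<rho> * real (tow (L + 2*R0 - 1) L + 1) \<le> real n" using nt by linarith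
  have "X + 1 < twrn (X + 1)" by (rule twrn_gt)
  moreover have "2*R0 + 2 \<le> X + 1" using Xd L16 by simp
  ultimately show "2*R0 + 2 < n" using nt by simp
qed

lemma main_case:
  fixes C n :: nat and \<rho> :: real and A :: local_alg
  assumes C1: "C \<ge> 1" and rho: "\<rho> \<ge> 1" and n3: "n \<ge> 3"
  shows "\<exists>idf port. valid_ids C n idf \<and> valid_ports n (cycle_graph n) port \<and>
          (\<forall>r. solved_by \<rho> n A (cycle_graph n) idf port r \<longrightarrow>
                real r \<ge> (1/1000) * real (log_star n) / \<rho>)"
proof -
  define b where "b = (1/1000) * real (log_star n) / \<rho>"
  define R0 where "R0 = nat \<lceil>b\<rceil> - 1"
  have b0: "b \<ge> 0" unfolding b_def using rho by simp
  show ?thesis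
  proof (cases "\<exists>P. perm n P \<and> \<not> output_ok \<rho> n A (cycle_graph n) (\<lambda>i. P ! i) (portc n) R0")
    case True
    then obtain P where P: "perm n P" "\<not> output_ok \<rho> n A (cycle_graph n) (\<lambda>i. P ! i) (portc n) R0" by blast
    show ?thesis
    proof (intro exI conjI allI impI)
      show "valid_ids C n (\<lambda>i. P ! i)" by (rule valid_ids_perm[OF C1 P(1)])
      show "valid_ports n (cycle_graph n) (portc n)" by (rule valid_ports_cyc[OF n3])
      fix r assume sb: "solved_by \<rho> n A (cycle_graph n) (\<lambda>i. P ! i) (portc n) r"
      show "real r \<ge> (1/1000) * real (log_star n) / \<rho>"
      proof (rule ccontr)
        assume "\<not> ?thesis"
        then have "real r < b" unfolding b_def by simp
        then have "real r < real_of_int \<lceil>b\<rceil>" using le_of_int_ceiling[of b] by linarith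
        then have "int r < \<lceil>b\<rceil>" by linarith
        then have "r \<le> R0" unfolding R0_def by linarith
        then have "output_ok \<rho> n A (cycle_graph n) (\<lambda>i. P ! i) (portc n) R0"
          using sb unfolding solved_by_def by blast
        then show False using P(2) by simp
      qed
    qed
  next
    case False
    then have okall: "\<And>P. perm n P \<Longrightarrow> output_ok \<rho> n A (cycle_graph n) (\<lambda>i. P ! i) (portc n) R0" by blast
    interpret allok \<rho> n A R0 using n3 rho okall by unfold_locales auto
    show ?thesis
    proof (cases "R0 = 0")
      case True then show ?thesis using zero_contra by blast
    next
      case False
      then have R1: "R0 \<ge> 1" by simp
      have cb: "\<lceil>b\<rceil> \<ge> 2" using R1 unfolding R0_def by linarith
      have b1: "b > 1"
      proof (rule ccontr)
        assume "\<not> b > 1"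
        then have "\<lceil>b\<rceil> \<le> 1" by (simp add: ceiling_le_iff)
        then show False using cb by simp
      qed
      have R0b: "real (R0 + 1) < b + 1"
      proof -
        have "int (R0 + 1) = \<lceil>b\<rceil>" unfolding R0_def using cb by simp
        then have "real (R0 + 1) = real_of_int \<lceil>b\<rceil>" by (metis of_int_of_nat_eq)
        moreover have "real_of_int \<lceil>b\<rceil> < b + 1" using ceiling_correct[of b] by linarith
        ultimately show ?thesis by simp
      qed
      define p where "p = nat \<lceil>\<rho>\<rceil>"
      have rp: "\<rho> \<le> real p" unfolding p_def using le_of_int_ceiling[of \<rho>] rho by linarith
      have pr: "real p < \<rho> + 1" unfolding p_def using ceiling_correct[of \<rho>] rho by linarith
      have p1: "p \<ge> 1" using rp rho by linarith
      define L where "L = 16 * R0 * p"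
      define X where "X = L + (L + 2*R0 - 1)"
      have ls: "real (log_star n) = 1000 * \<rho> * b" unfolding b_def using rho by simp
      have ls1000: "real (log_star n) > 1000" using ls b1 rho
        by (smt (verit, best) mult_less_cancel_left1 mult_le_cancel_left2)
      have "R0 \<le> R0 * p" using p1 by simp
      then have "X \<le> 34 * R0 * p" unfolding X_def L_def by (simp only: mult.assoc)
      then have "real X \<le> 34 * real R0 * real p" by (metis of_nat_le_iff of_nat_mult of_nat_numeral)
      also have "\<dots> \<le> 34 * real R0 * (2 * \<rho>)" using pr rho by (intro mult_left_mono) auto
      also have "\<dots> = 68 * \<rho> * real R0" by simp
      also have "\<dots> \<le> 68 * \<rho> * b" using R0b rho by (intro mult_left_mono) auto
      also have "\<dots> = 0.068 * real (log_star n)" using ls by simp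
      finally have "real X \<le> 0.068 * real (log_star n)" .
      then have "real (X + 1) < real (log_star n)" using ls1000 by simp
      then have Xl: "X + 1 < log_star n" by (simp only: of_nat_less_iff)
      note pb = param_bound[OF R1 p1 L_def X_def Xl rp rho]
      have L1: "L \<ge> 1" unfolding L_def using R1 p1 by simp
      have "\<rho> * real R0 \<le> real p * real R0" using rp by (intro mult_right_mono) auto
      then have c1: "16 * \<rho> * real R0 \<le> real L" unfolding L_def by (simp add: algebra_simps)
      show ?thesis using general_contra[OF L1 pb(1) c1 pb(2)] by blast
    qed
  qed
qed


theorem theorem7p2:
  fixes C :: nat
  assumes "C \<ge> 1"
  shows "\<exists>c::real. c > 0 \<and> (\<exists>N::nat. \<forall>\<rho>::real. \<forall>n::nat. \<forall>A::local_alg.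
     \<rho> \<ge> 1 \<and> n \<ge> N \<and>
     (\<forall>E idf port. simple_graph n E \<and> max_degree_le n E 2 \<and> valid_ids C n idf \<and>
          valid_ports n E port \<longrightarrow> (\<exists>r. solved_by \<rho> n A E idf port r))
     \<longrightarrow> (\<exists>idf port. valid_ids C n idf \<and> valid_ports n (cycle_graph n) port \<and>
          (\<forall>r. solved_by \<rho> n A (cycle_graph n) idf port r \<longrightarrow>
                real r \<ge> c * real (log_star n) / \<rho>)))"
proof (intro exI[of _ "1/1000"] conjI exI[of _ 3] allI impI)
  show "(0::real) < 1/1000" by simp
  fix \<rho> :: real and n :: nat and A :: local_alg
  assume h: "1 \<le> \<rho> \<and> 3 \<le> n \<and>
     (\<forall>E idf port. simple_graph n E \<and> max_degree_le n E 2 \<and> valid_ids C n idf \<and>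
          valid_ports n E port \<longrightarrow> (\<exists>r. solved_by \<rho> n A E idf port r))"
  show "\<exists>idf port. valid_ids C n idf \<and> valid_ports n (cycle_graph n) port \<and>
          (\<forall>r. solved_by \<rho> n A (cycle_graph n) idf port r \<longrightarrow>
                real r \<ge> (1/1000) * real (log_star n) / \<rho>)"
    using main_case[OF assms] h by blast
qed

end
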